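(* Let $P \subset \mathbb{R}$ be a finite or countably infinite discrete set (containing none of its accumulation points). Let $\mathcal{H} = \ell^2(P)$ with orthonormal basis $(\psi_\lambda)_{\lambda\in P}$, and let $K$ be the self-adjoint (possibly unbounded) operator on $\mathcal{H}$ with $K\psi_\lambda = \lambda\psi_\lambda$ for all $\lambda\in P$ (defined on its maximal domain). Let $v\in\mathcal{H}$ be a cyclic vector for $K$, i.e. $v$ lies in $\bigcap_{n\ge 0}\operatorname{Dom}(K^n)$ and the span of $\{v, Kv, K^2v,\dots\}$ is dense in $\mathcal{H}$. On $\tilde{\mathcal H} = \mathcal{H}\oplus\mathbb{C}$ define the self-adjoint operators $$A(x\oplus\alpha) = (Kx + \alpha v)\oplus \langle v, x\rangle,\quad x\in\operatorname{Dom}(K),\ \alpha\in\mathbb{C},\qquad B(x\oplus\alpha) = 0\oplus\alpha,$$ i.e. $A = \begin{pmatrix} K & v\\ \langle v,\cdot\rangle & 0\end{pmatrix}$ and $B = \begin{pmatrix} 0&0\\0&1\end{pmatrix}$. Then $$\bigcup_{t \in \mathbb{R}} \sigma(A+tB) = \mathbb{R} \setminus P.$$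
   Context: $\sigma(T)$ denotes the spectrum of an operator $T$. The inner product $\langle\cdot,\cdot\rangle$ is linear in the second argument. *)

theory Defs
  imports "HOL-Analysis.Analysis"
begin

text \<open>Concrete model of the Hilbert space l2(P), P a subset of the reals:
  functions real => complex vanishing outside P with square-summable moduli on P.
  The basis vector psi_lambda is the indicator of lambda.\<close>

definition l2 :: "real set \<Rightarrow> (real \<Rightarrow> complex) set" where
  "l2 P = {x. (\<forall>l. l \<notin> P \<longrightarrow> x l = 0) \<and> (\<lambda>l. (cmod (x l))\<^sup>2) summable_on P}"

definition l2norm :: "real set \<Rightarrow> (real \<Rightarrow> complex) \<Rightarrow> real" where
  "l2norm P x = sqrt (\<Sum>\<^sub>\<infinity>l\<in>P. (cmod (x l))\<^sup>2)"

text \<open>Inner product, linear in the second argument.\<close>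
definition l2inner :: "real set \<Rightarrow> (real \<Rightarrow> complex) \<Rightarrow> (real \<Rightarrow> complex) \<Rightarrow> complex" where
  "l2inner P v x = (\<Sum>\<^sub>\<infinity>l\<in>P. cnj (v l) * x l)"

definition multK :: "(real \<Rightarrow> complex) \<Rightarrow> (real \<Rightarrow> complex)" where
  "multK x = (\<lambda>l. complex_of_real l * x l)"

definition domK :: "real set \<Rightarrow> (real \<Rightarrow> complex) set" where
  "domK P = {x \<in> l2 P. multK x \<in> l2 P}"

definition cyclic_vec :: "real set \<Rightarrow> (real \<Rightarrow> complex) \<Rightarrow> bool" where
  "cyclic_vec P v \<longleftrightarrow>
     v \<in> l2 P \<and> (\<forall>n. (multK ^^ n) v \<in> l2 P) \<and>
     (\<forall>x \<in> l2 P. \<forall>e>0. \<exists>N (c :: nat \<Rightarrow> complex).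
        l2norm P (\<lambda>l. x l - (\<Sum>n<N. c n * (multK ^^ n) v l)) < e)"

type_synonym vecT = "(real \<Rightarrow> complex) \<times> complex"

definition Ht :: "real set \<Rightarrow> vecT set" where
  "Ht P = l2 P \<times> UNIV"

definition normT :: "real set \<Rightarrow> vecT \<Rightarrow> real" where
  "normT P u = sqrt ((l2norm P (fst u))\<^sup>2 + (cmod (snd u))\<^sup>2)"

definition addT :: "vecT \<Rightarrow> vecT \<Rightarrow> vecT" where
  "addT u w = (\<lambda>l. fst u l + fst w l, snd u + snd w)"

definition scaleT :: "complex \<Rightarrow> vecT \<Rightarrow> vecT" where
  "scaleT z u = (\<lambda>l. z * fst u l, z * snd u)"

definition opA :: "real set \<Rightarrow> (real \<Rightarrow> complex) \<Rightarrow> vecT \<Rightarrow> vecT" where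
  "opA P v u = (\<lambda>l. multK (fst u) l + snd u * v l, l2inner P v (fst u))"

definition opB :: "vecT \<Rightarrow> vecT" where
  "opB u = (\<lambda>l. 0, snd u)"

text \<open>Spectrum of an (unbounded) operator T with domain D in H~: z is in the resolvent set
  iff T - z is a bijection of D onto H~ with bounded inverse.\<close>
definition specT :: "real set \<Rightarrow> vecT set \<Rightarrow> (vecT \<Rightarrow> vecT) \<Rightarrow> complex set" where
  "specT P D T = {z. \<not> (bij_betw (\<lambda>u. addT (T u) (scaleT (- z) u)) D (Ht P) \<and>
       (\<exists>C. \<forall>u\<in>D. normT P u \<le> C * normT P (addT (T u) (scaleT (- z) u))))}"

end

theory Submission
  imports Defs
begin

definition nsq :: "real set \<Rightarrow> (real \<Rightarrow> complex) \<Rightarrow> real" where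
  "nsq P x = (\<Sum>\<^sub>\<infinity>l\<in>P. (cmod (x l))\<^sup>2)"

definition Sop :: "real set \<Rightarrow> (real \<Rightarrow> complex) \<Rightarrow> real \<Rightarrow> complex \<Rightarrow> vecT \<Rightarrow> vecT" where
  "Sop P v t z u = (\<lambda>l. of_real l * fst u l + snd u * v l - z * fst u l,
                    l2inner P v (fst u) + (of_real t - z) * snd u)"

definition Rz :: "real set \<Rightarrow> complex \<Rightarrow> (real \<Rightarrow> complex) \<Rightarrow> (real \<Rightarrow> complex)" where
  "Rz P z y = (\<lambda>l. if l \<in> P then y l / (of_real l - z) else 0)"

theorem lemma2p10:
  fixes P :: "real set" and v :: "real \<Rightarrow> complex"
  assumes "countable P"
    and "discrete P"
    and "cyclic_vec P v"
  shows "(\<Union>t::real. specT P (domK P \<times> UNIV)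
            (\<lambda>u. addT (opA P v u) (scaleT (complex_of_real t) (opB u))))
         = complex_of_real ` (UNIV - P)"
proof -
have l2D: "x \<in> l2 P \<Longrightarrow> l \<notin> P \<Longrightarrow> x l = 0"
    for x P l
  by (simp add: l2_def)

have l2_summ: "x \<in> l2 P \<Longrightarrow> (\<lambda>l. (cmod (x l))\<^sup>2) summable_on P"
    for x P
  by (simp add: l2_def)

have nsq_nonneg: "0 \<le> nsq P x"
    for P x
  unfolding nsq_def by (rule infsum_nonneg) simp

have l2norm_sq: "(l2norm P x)\<^sup>2 = nsq P x"
    for P x
  unfolding l2norm_def nsq_def[symmetric] using nsq_nonneg by simp

have normT_eq: "normT P u = sqrt (nsq P (fst u) + (cmod (snd u))\<^sup>2)"
    for P u
  unfolding normT_def l2norm_sq ..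

have nsq_ge_pt: "(cmod (x l))\<^sup>2 \<le> nsq P x"
    if "x \<in> l2 P" "l \<in> P"
    for x P l
proof -
  have "sum (\<lambda>l. (cmod (x l))\<^sup>2) {l} \<le> nsq P x"
    unfolding nsq_def by (rule finite_sum_le_infsum) (use that l2_summ in auto)
  thus ?thesis by simp
qed

have nsq_zero: "x l = 0"
    if "x \<in> l2 P" "nsq P x = 0"
    for x P l
proof (cases "l \<in> P")
  case True
  then show ?thesis using nsq_ge_pt[OF that(1) True] that(2) by simp
next
  case False
  then show ?thesis using that(1) l2D by auto
qed

have cplx_summ: "g summable_on P"
    if "h summable_on P" "\<And>l. l \<in> P \<Longrightarrow> cmod (g l) \<le> h l"
    for g :: "real \<Rightarrow> complex" and h :: "real \<Rightarrow> real" and P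
proof -
  have "(\<lambda>l. norm (g l)) summable_on P"
    by (rule summable_on_comparison_test[OF that(1)]) (use that(2) in auto)
  thus ?thesis using summable_on_iff_abs_summable_on_complex by blast
qed

have l2_bound3: "x \<in> l2 P \<and> nsq P x \<le> 3*a\<^sup>2*nsq P y1 + 3*b\<^sup>2*nsq P y2 + 3*c\<^sup>2*nsq P y3"
    if x0: "\<And>l. l \<notin> P \<Longrightarrow> x l = 0" and y: "y1 \<in> l2 P" "y2 \<in> l2 P" "y3 \<in> l2 P"
    and abc: "0 \<le> a" "0 \<le> b" "0 \<le> c"
    and bd: "\<And>l. l \<in> P \<Longrightarrow> cmod (x l) \<le> a * cmod (y1 l) + b * cmod (y2 l) + c * cmod (y3 l)"
    for P x y1 y2 y3 a b c
proof -
  define g where "g l = 3*a\<^sup>2*(cmod (y1 l))\<^sup>2 + 3*b\<^sup>2*(cmod (y2 l))\<^sup>2 + 3*c\<^sup>2*(cmod (y3 l))\<^sup>2" for l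
  have s1: "(\<lambda>l. 3*a\<^sup>2*(cmod (y1 l))\<^sup>2) summable_on P"
    by (rule summable_on_cmult_right) (rule l2_summ[OF y(1)])
  have s2: "(\<lambda>l. 3*b\<^sup>2*(cmod (y2 l))\<^sup>2) summable_on P"
    by (rule summable_on_cmult_right) (rule l2_summ[OF y(2)])
  have s3: "(\<lambda>l. 3*c\<^sup>2*(cmod (y3 l))\<^sup>2) summable_on P"
    by (rule summable_on_cmult_right) (rule l2_summ[OF y(3)])
  have gs: "g summable_on P" unfolding g_def
    by (intro summable_on_add s1 s2 s3)
  have pt: "(cmod (x l))\<^sup>2 \<le> g l" if "l \<in> P" for l
  proof -
    define p where "p = cmod (y1 l)" define q where "q = cmod (y2 l)" define r where "r = cmod (y3 l)"
    have "cmod (x l) \<le> a*p + b*q + c*r" using bd[OF that] p_def q_def r_def by simp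
    moreover have "0 \<le> cmod (x l)" by simp
    ultimately have "(cmod (x l))\<^sup>2 \<le> (a*p + b*q + c*r)\<^sup>2"
      by (simp add: power_mono)
    also have "\<dots> \<le> 3*a\<^sup>2*p\<^sup>2 + 3*b\<^sup>2*q\<^sup>2 + 3*c\<^sup>2*r\<^sup>2"
    proof -
      have "3*a\<^sup>2*p\<^sup>2 + 3*b\<^sup>2*q\<^sup>2 + 3*c\<^sup>2*r\<^sup>2 - (a*p + b*q + c*r)\<^sup>2
            = (a*p-b*q)\<^sup>2 + (b*q-c*r)\<^sup>2 + (a*p-c*r)\<^sup>2"
        by (simp add: power2_eq_square algebra_simps)
      moreover have "0 \<le> (a*p-b*q)\<^sup>2 + (b*q-c*r)\<^sup>2 + (a*p-c*r)\<^sup>2" by simp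
      ultimately show ?thesis by linarith
    qed
    finally show ?thesis unfolding g_def p_def q_def r_def .
  qed
  have xs: "(\<lambda>l. (cmod (x l))\<^sup>2) summable_on P"
    by (rule summable_on_comparison_test[OF gs]) (use pt in auto)
  have "nsq P x \<le> infsum g P" unfolding nsq_def
    by (rule infsum_mono[OF xs gs]) (use pt in auto)
  also have "infsum g P = 3*a\<^sup>2*nsq P y1 + 3*b\<^sup>2*nsq P y2 + 3*c\<^sup>2*nsq P y3"
    unfolding g_def nsq_def
    by (simp add: infsum_add s1 s2 s3 summable_on_add infsum_cmult_right l2_summ y)
  finally show ?thesis using xs x0 by (simp add: l2_def)
qed

have zero_l2[simp]: "(\<lambda>_. 0) \<in> l2 P"
    for P
  by (simp add: l2_def)

have nsq_zero_fn[simp]: "nsq P (\<lambda>_. 0) = 0"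
    for P
  by (simp add: nsq_def)

have l2_lin: "(\<lambda>l. a * x l + b * y l) \<in> l2 P"
    if "x \<in> l2 P" "y \<in> l2 P"
    for x y P a b
proof -
  have "(\<lambda>l. a * x l + b * y l) \<in> l2 P \<and> nsq P (\<lambda>l. a * x l + b * y l) \<le> 3*(cmod a)\<^sup>2*nsq P x + 3*(cmod b)\<^sup>2*nsq P y + 3*0\<^sup>2*nsq P (\<lambda>_. 0)"
    by (rule l2_bound3) (use that in \<open>auto simp: l2D norm_mult intro: order.trans[OF norm_triangle_ineq]\<close>)
  thus ?thesis by blast
qed

have single_l2: "(\<lambda>l. if l = a then c else 0) \<in> l2 P \<and> nsq P (\<lambda>l. if l = a then c else 0) = (cmod c)\<^sup>2"
    if "a \<in> P"
    for a P c
proof -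
  have e: "infsum (\<lambda>l. (cmod (if l = a then c else 0))\<^sup>2) P = infsum (\<lambda>l. (cmod (if l = a then c else 0))\<^sup>2) {a}"
    by (rule infsum_cong_neutral) (use that in auto)
  have s: "(\<lambda>l. (cmod (if l = a then c else 0))\<^sup>2) summable_on P"
  proof -
    have "((\<lambda>l. (cmod (if l = a then c else 0))\<^sup>2) summable_on {a}) = ((\<lambda>l. (cmod (if l = a then c else 0))\<^sup>2) summable_on P)"
      by (rule summable_on_cong_neutral) (use that in auto)
    thus ?thesis by simp
  qed
  show ?thesis using s e that by (auto simp: l2_def nsq_def)
qed

have inner_summ: "(\<lambda>l. cnj (w l) * x l) summable_on P"
    if "w \<in> l2 P" "x \<in> l2 P"
    for w x P
proof (rule cplx_summ)
  show "(\<lambda>l. (1/2) * ((cmod (w l))\<^sup>2 + (cmod (x l))\<^sup>2)) summable_on P"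
    by (intro summable_on_cmult_right summable_on_add l2_summ that)
  fix l
  have "2 * (cmod (w l) * cmod (x l)) \<le> (cmod (w l))\<^sup>2 + (cmod (x l))\<^sup>2"
  proof -
    have "0 \<le> (cmod (w l) - cmod (x l))\<^sup>2" by simp
    thus ?thesis by (simp add: power2_eq_square algebra_simps)
  qed
  thus "cmod (cnj (w l) * x l) \<le> (1/2) * ((cmod (w l))\<^sup>2 + (cmod (x l))\<^sup>2)"
    by (simp add: norm_mult)
qed

have inner_amgm: "cmod (l2inner P w x) \<le> (s * nsq P w + nsq P x / s) / 2"
    if "w \<in> l2 P" "x \<in> l2 P" "s > 0"
    for w x P s
proof -
  have sm: "(\<lambda>l. cnj (w l) * x l) summable_on P" by (rule inner_summ[OF that(1,2)])
  hence ab: "(\<lambda>l. norm (cnj (w l) * x l)) summable_on P"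
    using summable_on_iff_abs_summable_on_complex[of "\<lambda>l. cnj (w l) * x l" P] by simp
  have "cmod (l2inner P w x) \<le> (\<Sum>\<^sub>\<infinity>l\<in>P. cmod (cnj (w l) * x l))"
    unfolding l2inner_def by (rule norm_infsum_bound[OF ab])
  also have "\<dots> \<le> (\<Sum>\<^sub>\<infinity>l\<in>P. (1/2) * (s * (cmod (w l))\<^sup>2 + (1/s) * (cmod (x l))\<^sup>2))"
  proof (rule infsum_mono)
    show "(\<lambda>l. cmod (cnj (w l) * x l)) summable_on P"
      using ab by simp
    show "(\<lambda>l. (1/2) * (s * (cmod (w l))\<^sup>2 + (1/s) * (cmod (x l))\<^sup>2)) summable_on P"
      by (intro summable_on_add summable_on_cmult_right l2_summ that)
    fix l
    define pp where "pp = cmod (w l)" define qq where "qq = cmod (x l)"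
    have "0 \<le> (s * pp - qq)\<^sup>2" by simp
    hence "2 * s * (pp * qq) \<le> s * (s * pp\<^sup>2) + qq\<^sup>2" by (simp add: power2_eq_square algebra_simps)
    hence "2 * (pp * qq) \<le> s * pp\<^sup>2 + qq\<^sup>2 / s" using that(3)
      by (simp add: field_simps)
    thus "cmod (cnj (w l) * x l) \<le> (1/2) * (s * (cmod (w l))\<^sup>2 + (1/s) * (cmod (x l))\<^sup>2)"
      by (simp add: norm_mult pp_def qq_def)
  qed
  also have "\<dots> = (1/2) * (s * nsq P w + (1/s) * nsq P x)"
  proof -
    have s1: "(\<lambda>l. s * (cmod (w l))\<^sup>2) summable_on P" by (intro summable_on_cmult_right l2_summ that)
    have s2: "(\<lambda>l. (1/s) * (cmod (x l))\<^sup>2) summable_on P" by (intro summable_on_cmult_right l2_summ that)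
    have "(\<Sum>\<^sub>\<infinity>l\<in>P. (1/2) * (s * (cmod (w l))\<^sup>2 + (1/s) * (cmod (x l))\<^sup>2))
        = (1/2) * (\<Sum>\<^sub>\<infinity>l\<in>P. s * (cmod (w l))\<^sup>2 + (1/s) * (cmod (x l))\<^sup>2)"
      by (rule infsum_cmult_right) (intro summable_on_add s1 s2)
    also have "(\<Sum>\<^sub>\<infinity>l\<in>P. s * (cmod (w l))\<^sup>2 + (1/s) * (cmod (x l))\<^sup>2)
        = (\<Sum>\<^sub>\<infinity>l\<in>P. s * (cmod (w l))\<^sup>2) + (\<Sum>\<^sub>\<infinity>l\<in>P. (1/s) * (cmod (x l))\<^sup>2)"
      by (rule infsum_add[OF s1 s2])
    also have "(\<Sum>\<^sub>\<infinity>l\<in>P. s * (cmod (w l))\<^sup>2) = s * nsq P w"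
      unfolding nsq_def by (rule infsum_cmult_right) (intro l2_summ that)
    also have "(\<Sum>\<^sub>\<infinity>l\<in>P. (1/s) * (cmod (x l))\<^sup>2) = (1/s) * nsq P x"
      unfolding nsq_def by (rule infsum_cmult_right) (intro l2_summ that)
    finally show ?thesis .
  qed
  also have "\<dots> = (s * nsq P w + nsq P x / s) / 2" by simp
  finally show ?thesis .
qed

have inner_zero_left: "l2inner P w x = 0"
    if "\<And>l. l \<in> P \<Longrightarrow> w l = 0"
    for P w x
  unfolding l2inner_def by (rule infsum_0) (simp add: that)

have inner_zero_right: "l2inner P w x = 0"
    if "\<And>l. l \<in> P \<Longrightarrow> x l = 0"
    for P w x
  unfolding l2inner_def by (rule infsum_0) (simp add: that)

have inner_CS: "cmod (l2inner P w x) \<le> sqrt (nsq P w) * sqrt (nsq P x)"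
    if "w \<in> l2 P" "x \<in> l2 P"
    for w x P
proof (cases "nsq P w = 0 \<or> nsq P x = 0")
  case True
  then show ?thesis
    using inner_zero_left[of P w x] inner_zero_right[of P x w] nsq_zero that by auto
next
  case False
  define A where "A = nsq P w" define B where "B = nsq P x"
  have A: "A > 0" "B > 0" using False nsq_nonneg[of P w] nsq_nonneg[of P x] A_def B_def by auto
  define s where "s = sqrt B / sqrt A"
  have s: "s > 0" using A s_def by simp
  have "cmod (l2inner P w x) \<le> (s * A + B / s)/2"
    using inner_amgm[OF that s] A_def B_def by simp
  also have "s * A = sqrt A * sqrt B"
  proof -
    have sa: "sqrt A * sqrt A = A" using A by simp
    have "s * A = sqrt B / sqrt A * (sqrt A * sqrt A)" unfolding s_def sa ..
    also have "\<dots> = sqrt A * sqrt B" using A by (simp add: field_simps)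
    finally show ?thesis .
  qed
  also have "B / s = sqrt A * sqrt B"
  proof -
    have sb: "sqrt B * sqrt B = B" using A by simp
    have "B / s = (sqrt B * sqrt B) / (sqrt B / sqrt A)" unfolding s_def sb ..
    also have "\<dots> = sqrt A * sqrt B" using A by (simp add: field_simps)
    finally show ?thesis .
  qed
  finally show ?thesis using A_def B_def by simp
qed

have inner_CS2: "(cmod (l2inner P w x))\<^sup>2 \<le> nsq P w * nsq P x"
    if "w \<in> l2 P" "x \<in> l2 P"
    for w x P
proof -
  have "(cmod (l2inner P w x))\<^sup>2 \<le> (sqrt (nsq P w) * sqrt (nsq P x))\<^sup>2"
    by (rule power_mono[OF inner_CS[OF that]]) simp
  also have "\<dots> = nsq P w * nsq P x"
    using nsq_nonneg by (simp add: power_mult_distrib)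
  finally show ?thesis .
qed

have inner_lin: "l2inner P w (\<lambda>l. a * x l + b * y l) = a * l2inner P w x + b * l2inner P w y"
    if "w \<in> l2 P" "x \<in> l2 P" "y \<in> l2 P"
    for w x y P a b
proof -
  have "l2inner P w (\<lambda>l. a * x l + b * y l) = (\<Sum>\<^sub>\<infinity>l\<in>P. a * (cnj (w l) * x l) + b * (cnj (w l) * y l))"
    unfolding l2inner_def by (simp add: algebra_simps)
  also have "\<dots> = a * l2inner P w x + b * l2inner P w y"
    unfolding l2inner_def
    by (simp add: infsum_add summable_on_cmult_right inner_summ that infsum_cmult_right)
  finally show ?thesis .
qed

have inner_single: "l2inner P w (\<lambda>l. if l = a then c else 0) = cnj (w a) * c"
    if "a \<in> P"
    for a P w c
proof -
  have "l2inner P w (\<lambda>l. if l = a then c else 0) = (\<Sum>\<^sub>\<infinity>l\<in>{a}. cnj (w l) * (if l = a then c else 0))"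
    unfolding l2inner_def by (rule infsum_cong_neutral) (use that in auto)
  thus ?thesis by simp
qed

have spec_eq: "specT P D (\<lambda>u. addT (opA P v u) (scaleT (complex_of_real t) (opB u)))
   = {z. \<not> (bij_betw (Sop P v t z) D (Ht P) \<and> (\<exists>C. \<forall>u\<in>D. normT P u \<le> C * normT P (Sop P v t z u)))}"
    for P D v t
proof -
  have e: "addT (addT (opA P v u) (scaleT (complex_of_real t) (opB u))) (scaleT (- z) u) = Sop P v t z u" for z u
    by (auto simp: fun_eq_iff addT_def scaleT_def opA_def opB_def Sop_def multK_def algebra_simps)
  have e2: "(\<lambda>u. addT (addT (opA P v u) (scaleT (complex_of_real t) (opB u))) (scaleT (- z) u)) = Sop P v t z" for z
    using e by blast
  show ?thesis unfolding specT_def e e2 ..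
qed

have domK_l2: "x \<in> domK P \<Longrightarrow> x \<in> l2 P"
    for x P
  by (simp add: domK_def)

have domK_K: "x \<in> domK P \<Longrightarrow> multK x \<in> l2 P"
    for x P
  by (simp add: domK_def)

have domK_diff: "(\<lambda>l. x1 l - x2 l) \<in> domK P"
    if "x1 \<in> domK P" "x2 \<in> domK P"
    for x1 x2 P
proof -
  have "(\<lambda>l. 1 * x1 l + (-1) * x2 l) \<in> l2 P" by (rule l2_lin) (use that domK_l2 in auto)
  moreover have "(\<lambda>l. 1 * multK x1 l + (-1) * multK x2 l) \<in> l2 P" by (rule l2_lin) (use that domK_K in auto)
  ultimately show ?thesis by (simp add: domK_def multK_def algebra_simps)
qed

have Sop_maps: "Sop P v t z (x, a) \<in> Ht P"
    if "v \<in> l2 P" "x \<in> domK P"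
    for v P x t z a
proof -
  have "(\<lambda>l. of_real l * x l + a * v l - z * x l) \<in> l2 P \<and> nsq P (\<lambda>l. of_real l * x l + a * v l - z * x l) \<le> 3*1\<^sup>2*nsq P (multK x) + 3*(cmod a)\<^sup>2*nsq P v + 3*(cmod z)\<^sup>2*nsq P x"
  proof (rule l2_bound3)
    fix l
    have "cmod (of_real l * x l + a * v l - z * x l) \<le> cmod (of_real l * x l + a * v l) + cmod (z * x l)"
      by (rule norm_triangle_ineq4)
    also have "\<dots> \<le> cmod (of_real l * x l) + cmod (a * v l) + cmod (z * x l)"
      using norm_triangle_ineq by simp
    finally show "cmod (of_real l * x l + a * v l - z * x l) \<le> 1 * cmod (multK x l) + cmod a * cmod (v l) + cmod z * cmod (x l)"
      by (simp add: multK_def norm_mult)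
  qed (use that l2D[OF domK_l2[OF that(2)]] l2D[OF that(1)] in \<open>auto simp: domK_K domK_l2\<close>)
  thus ?thesis by (simp add: Sop_def Ht_def)
qed

have Sop_diff: "Sop P v t z (\<lambda>l. x1 l - x2 l, a1 - a2)
     = (\<lambda>l. fst (Sop P v t z (x1, a1)) l - fst (Sop P v t z (x2, a2)) l,
        snd (Sop P v t z (x1, a1)) - snd (Sop P v t z (x2, a2)))"
    if "v \<in> l2 P" "x1 \<in> l2 P" "x2 \<in> l2 P"
    for v P x1 x2 t z a1 a2
proof -
  have "l2inner P v (\<lambda>l. 1 * x1 l + (-1) * x2 l) = 1 * l2inner P v x1 + (-1) * l2inner P v x2"
    by (rule inner_lin) (use that in auto)
  thus ?thesis by (simp add: Sop_def algebra_simps fun_eq_iff)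
qed

have not_spec: "bij_betw (Sop P v t z) (domK P \<times> (UNIV :: complex set)) (Ht P) \<and>
         (\<exists>C. \<forall>u\<in>domK P \<times> (UNIV :: complex set). normT P u \<le> C * normT P (Sop P v t z u))"
    if v: "v \<in> l2 P" and M: "0 \<le> M"
    and bd: "\<And>x a. x \<in> domK P \<Longrightarrow> nsq P x + (cmod a)\<^sup>2
              \<le> M * (nsq P (fst (Sop P v t z (x, a))) + (cmod (snd (Sop P v t z (x, a))))\<^sup>2)"
    and surj: "\<And>y b. y \<in> l2 P \<Longrightarrow> \<exists>x a. x \<in> domK P \<and> Sop P v t z (x, a) = (y, b)"
    for v P M t z
proof (intro conjI)
  show "bij_betw (Sop P v t z) (domK P \<times> (UNIV :: complex set)) (Ht P)"
    unfolding bij_betw_def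
  proof (intro conjI)
    show "inj_on (Sop P v t z) (domK P \<times> (UNIV :: complex set))"
    proof (rule inj_onI)
      fix u1 u2 assume u: "u1 \<in> domK P \<times> (UNIV :: complex set)" "u2 \<in> domK P \<times> (UNIV :: complex set)" and eq: "Sop P v t z u1 = Sop P v t z u2"
      obtain x1 a1 where u1: "u1 = (x1, a1)" "x1 \<in> domK P" using u by auto
      obtain x2 a2 where u2: "u2 = (x2, a2)" "x2 \<in> domK P" using u by auto
      have dD: "(\<lambda>l. x1 l - x2 l) \<in> domK P" by (rule domK_diff) (use u1 u2 in auto)
      have "Sop P v t z (\<lambda>l. x1 l - x2 l, a1 - a2) = (\<lambda>l. 0, 0)"
        using Sop_diff[OF v domK_l2[OF u1(2)] domK_l2[OF u2(2)], of t z a1 a2] eq u1 u2 by simp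
      hence "nsq P (\<lambda>l. x1 l - x2 l) + (cmod (a1 - a2))\<^sup>2 \<le> 0"
        using bd[OF dD, of "a1 - a2"] by simp
      moreover have "0 \<le> (cmod (a1 - a2))\<^sup>2" by simp
      moreover note nsq_nonneg[of P "\<lambda>l. x1 l - x2 l"]
      ultimately have z: "nsq P (\<lambda>l. x1 l - x2 l) = 0" "(cmod (a1 - a2))\<^sup>2 = 0" by linarith+
      hence z: "nsq P (\<lambda>l. x1 l - x2 l) = 0" "a1 = a2" by auto
      have xz: "x1 l = x2 l" for l using nsq_zero[OF domK_l2[OF dD] z(1)] by simp
      hence "x1 = x2" by (rule ext)
      thus "u1 = u2" using u1 u2 z(2) by simp
    qed
    show "Sop P v t z ` (domK P \<times> (UNIV :: complex set)) = Ht P"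
    proof
      show "Sop P v t z ` (domK P \<times> (UNIV :: complex set)) \<subseteq> Ht P" using Sop_maps[OF v] by auto
      show "Ht P \<subseteq> Sop P v t z ` (domK P \<times> (UNIV :: complex set))"
      proof
        fix w assume "w \<in> Ht P"
        then obtain y b where w: "w = (y, b)" "y \<in> l2 P" by (auto simp: Ht_def)
        then obtain x a where xa: "x \<in> domK P" "Sop P v t z (x, a) = (y, b)" using surj by blast
        hence "(x, a) \<in> domK P \<times> (UNIV :: complex set)" by simp
        thus "w \<in> Sop P v t z ` (domK P \<times> (UNIV :: complex set))" using w xa by (intro image_eqI[of _ _ "(x,a)"]) auto
      qed
    qed
  qed
  show "\<exists>C. \<forall>u\<in>domK P \<times> (UNIV :: complex set). normT P u \<le> C * normT P (Sop P v t z u)"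
  proof (intro exI ballI)
    fix u assume "u \<in> domK P \<times> (UNIV :: complex set)"
    then obtain x a where u: "u = (x, a)" "x \<in> domK P" by auto
    have "normT P u = sqrt (nsq P x + (cmod a)\<^sup>2)" using u normT_eq by simp
    also have "\<dots> \<le> sqrt (M * (nsq P (fst (Sop P v t z (x, a))) + (cmod (snd (Sop P v t z (x, a))))\<^sup>2))"
      using bd[OF u(2)] by simp
    also have "\<dots> = sqrt M * normT P (Sop P v t z u)"
      using u by (simp add: normT_eq real_sqrt_mult)
    finally show "normT P u \<le> sqrt M * normT P (Sop P v t z u)" .
  qed
qed

have Rz_dom: "Rz P z y \<in> domK P"
    if d: "0 < d" "\<And>l. l \<in> P \<Longrightarrow> d \<le> cmod (of_real l - z)" and y: "y \<in> l2 P"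
    for d P z y
proof -
  have "Rz P z y \<in> l2 P \<and> nsq P (Rz P z y) \<le> 3*(1/d)\<^sup>2*nsq P y + 3*0\<^sup>2*nsq P y + 3*0\<^sup>2*nsq P y"
  proof (rule l2_bound3)
    fix l assume l: "l \<in> P"
    have dl: "d \<le> cmod (of_real l - z)" using d l by auto
    have "cmod (y l) / cmod (of_real l - z) \<le> cmod (y l) / d"
      using d(1) dl by (intro divide_left_mono mult_pos_pos) auto
    thus "cmod (Rz P z y l) \<le> 1/d * cmod (y l) + 0 * cmod (y l) + 0 * cmod (y l)"
      using l by (simp add: Rz_def norm_divide)
  qed (use y d in \<open>auto simp: Rz_def\<close>)
  moreover have "multK (Rz P z y) \<in> l2 P \<and> nsq P (multK (Rz P z y)) \<le> 3*1\<^sup>2*nsq P y + 3*(cmod z / d)\<^sup>2*nsq P y + 3*0\<^sup>2*nsq P y"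
  proof (rule l2_bound3)
    fix l assume l: "l \<in> P"
    have dl: "d \<le> cmod (of_real l - z)" using d l by auto
    hence pos: "0 < cmod (of_real l - z)" using d by linarith
    have "cmod (of_real l :: complex) \<le> cmod (of_real l - z) + cmod z"
      by (metis add.commute diff_add_cancel norm_triangle_ineq)
    hence "cmod (of_real l :: complex) * cmod (y l) \<le> (cmod (of_real l - z) + cmod z) * cmod (y l)"
      by (rule mult_right_mono) simp
    also have "\<dots> = cmod (of_real l - z) * cmod (y l) + cmod z * cmod (y l)" by (simp add: algebra_simps)
    finally have "cmod (of_real l :: complex) * cmod (y l) / cmod (of_real l - z)
        \<le> (cmod (of_real l - z) * cmod (y l) + cmod z * cmod (y l)) / cmod (of_real l - z)"
      using pos by (simp add: divide_right_mono)
    also have "\<dots> = cmod (y l) + cmod z * cmod (y l) / cmod (of_real l - z)" using pos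
      by (simp add: field_simps)
    also have "cmod z * cmod (y l) / cmod (of_real l - z) \<le> cmod z * cmod (y l) / d"
      using d(1) dl by (intro divide_left_mono mult_pos_pos) auto
    finally show "cmod (multK (Rz P z y) l) \<le> 1 * cmod (y l) + cmod z / d * cmod (y l) + 0 * cmod (y l)"
      using l by (simp add: Rz_def multK_def norm_divide norm_mult)
  qed (use y d in \<open>auto simp: Rz_def multK_def\<close>)
  ultimately show ?thesis by (simp add: domK_def)
qed

have res_kernel: "(\<lambda>l. - Rz P z v l) \<in> domK P \<and> Sop P v t z (\<lambda>l. - Rz P z v l, 1) = (\<lambda>_. 0, 0)"
    if d: "0 < d" "\<And>l. l \<in> P \<Longrightarrow> d \<le> cmod (of_real l - z)" and v: "v \<in> l2 P"
    and c: "of_real t - z - l2inner P v (Rz P z v) = 0"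
    for d P z v t
proof
  have R: "Rz P z v \<in> domK P" by (rule Rz_dom[OF d v])
  have "(\<lambda>l. 0 * Rz P z v l + (-1) * Rz P z v l) \<in> domK P"
  proof -
    have "(\<lambda>l. (Rz P z v l - Rz P z v l) - Rz P z v l) \<in> domK P"
      by (intro domK_diff R)
    thus ?thesis by simp
  qed
  thus "(\<lambda>l. - Rz P z v l) \<in> domK P" by simp
  have i: "l2inner P v (\<lambda>l. 0 * Rz P z v l + (-1) * Rz P z v l) = 0 * l2inner P v (Rz P z v) + (-1) * l2inner P v (Rz P z v)"
    by (rule inner_lin) (use v R domK_l2 in auto)
  have f: "of_real l * - Rz P z v l + v l - z * - Rz P z v l = 0" for l
  proof (cases "l \<in> P")
    case True
    have "of_real l - z \<noteq> 0" using d True by (metis norm_zero not_le)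
    then show ?thesis using True by (simp add: Rz_def field_simps)
  next
    case False
    then show ?thesis using v l2D by (simp add: Rz_def)
  qed
  show "Sop P v t z (\<lambda>l. - Rz P z v l, 1) = (\<lambda>_. 0, 0)"
    using i c f by (simp add: Sop_def fun_eq_iff)
qed

have res_surj: "\<exists>x a. x \<in> domK P \<and> Sop P v t z (x, a) = (y, b)"
    if d: "0 < d" "\<And>l. l \<in> P \<Longrightarrow> d \<le> cmod (of_real l - z)" and v: "v \<in> l2 P"
    and c: "of_real t - z - l2inner P v (Rz P z v) \<noteq> 0" and y: "y \<in> l2 P"
    for d P z v t y b
proof -
  define cc where "cc = of_real t - z - l2inner P v (Rz P z v)"
  define a where "a = (b - l2inner P v (Rz P z y)) / cc"
  define x where "x = Rz P z (\<lambda>l. y l - a * v l)"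
  have ya: "(\<lambda>l. 1 * y l + (- a) * v l) \<in> l2 P" by (rule l2_lin[OF y v])
  have "(\<lambda>l. y l - a * v l) = (\<lambda>l. 1 * y l + (- a) * v l)" by (simp add: fun_eq_iff)
  hence ya': "(\<lambda>l. y l - a * v l) \<in> l2 P" using ya by simp
  have xD: "x \<in> domK P" unfolding x_def by (rule Rz_dom[OF d ya'])
  have xe: "x = (\<lambda>l. 1 * Rz P z y l + (-a) * Rz P z v l)"
    by (auto simp: x_def Rz_def fun_eq_iff diff_divide_distrib)
  have Ry: "Rz P z y \<in> l2 P" using Rz_dom[OF d y] domK_l2 by blast
  have Rv: "Rz P z v \<in> l2 P" using Rz_dom[OF d v] domK_l2 by blast
  have i: "l2inner P v x = l2inner P v (Rz P z y) - a * l2inner P v (Rz P z v)"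
    unfolding xe using inner_lin[OF v Ry Rv, of 1 "-a"] by simp
  have s2: "l2inner P v x + (of_real t - z) * a = b"
    using i c unfolding a_def cc_def by (simp add: field_simps)
  have f: "of_real l * x l + a * v l - z * x l = y l" for l
  proof (cases "l \<in> P")
    case True
    have nz: "of_real l - z \<noteq> 0" using d True by (metis norm_zero not_le)
    have xl: "x l = (y l - a * v l) / (of_real l - z)" by (simp add: x_def Rz_def True)
    have h: "(of_real l - z) * x l = y l - a * v l" using nz xl by simp
    have "of_real l * x l + a * v l - z * x l = (of_real l - z) * x l + a * v l" by (simp add: algebra_simps)
    then show ?thesis using h by simp
  next
    case False
    then show ?thesis using l2D[OF v False] l2D[OF y False] by (simp add: x_def Rz_def)
  qed
  have "Sop P v t z (x, a) = (y, b)" using s2 f by (simp add: Sop_def fun_eq_iff)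
  thus ?thesis using xD by blast
qed

have amgm: "p * q \<le> (s * p\<^sup>2 + q\<^sup>2 / s) / 2"
    if "s > 0"
    for p q s :: real
proof -
  have "0 \<le> (s * p - q)\<^sup>2" by simp
  hence "2 * s * (p * q) \<le> s * (s * p\<^sup>2) + q\<^sup>2" by (simp add: power2_eq_square algebra_simps)
  thus ?thesis using that by (simp add: field_simps)
qed

have half_le: "(A::real) \<le> (A + B) / 2 \<Longrightarrow> A \<le> B"
    for A B :: real
  by (simp add: field_simps)

have sym_est: "(Im z)\<^sup>2 * (nsq P x + (cmod a)\<^sup>2)
     \<le> nsq P (fst (Sop P v t z (x, a))) + (cmod (snd (Sop P v t z (x, a))))\<^sup>2"
    if v: "v \<in> l2 P" and x: "x \<in> domK P" and z: "Im z \<noteq> 0"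
    for v P x z a t
proof -
  define y where "y = fst (Sop P v t z (x, a))"
  define \<beta> where "\<beta> = snd (Sop P v t z (x, a))"
  define p where "p = l2inner P v x"
  have xl: "x \<in> l2 P" using x domK_l2 by blast
  have yl: "y \<in> l2 P" using Sop_maps[OF v x, of t z a] unfolding y_def by (simp add: Ht_def mem_Times_iff)
  have ydef: "y l = of_real l * x l + a * v l - z * x l" for l by (simp add: y_def Sop_def)
  have bdef: "\<beta> = p + (of_real t - z) * a" by (simp add: \<beta>_def p_def Sop_def)
  have sxy: "(\<lambda>l. cnj (x l) * y l) summable_on P" by (rule inner_summ[OF xl yl])
  have sxv: "(\<lambda>l. a * (cnj (x l) * v l)) summable_on P" by (intro summable_on_cmult_right inner_summ[OF xl v])
  have pt: "Im (cnj (x l) * y l) = Im (a * (cnj (x l) * v l)) + (- (Im z * (cmod (x l))\<^sup>2))" for l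
  proof -
    define n where "n = (cmod (x l))\<^sup>2"
    have xx: "cnj (x l) * x l = of_real n" unfolding n_def
      using complex_norm_square[of "x l"] by (simp add: mult.commute)
    have "cnj (x l) * y l = of_real l * (cnj (x l) * x l) + a * (cnj (x l) * v l) - z * (cnj (x l) * x l)"
      unfolding ydef by (simp add: algebra_simps)
    also have "\<dots> = of_real (l * n) + a * (cnj (x l) * v l) - z * of_real n" unfolding xx by simp
    finally show ?thesis unfolding n_def by simp
  qed
  have s1: "(\<lambda>l. Im (a * (cnj (x l) * v l))) summable_on P" by (rule summable_on_Im[OF sxv])
  have s2: "(\<lambda>l. - (Im z * (cmod (x l))\<^sup>2)) summable_on P"
    unfolding summable_on_uminus by (intro summable_on_cmult_right l2_summ xl)
  have "Im (l2inner P x y) = (\<Sum>\<^sub>\<infinity>l\<in>P. Im (cnj (x l) * y l))"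
    unfolding l2inner_def by (rule infsum_Im[OF sxy, symmetric])
  also have "\<dots> = (\<Sum>\<^sub>\<infinity>l\<in>P. Im (a * (cnj (x l) * v l)) + (- (Im z * (cmod (x l))\<^sup>2)))"
    unfolding pt ..
  also have "\<dots> = (\<Sum>\<^sub>\<infinity>l\<in>P. Im (a * (cnj (x l) * v l))) + (\<Sum>\<^sub>\<infinity>l\<in>P. - (Im z * (cmod (x l))\<^sup>2))"
    by (rule infsum_add[OF s1 s2])
  also have "(\<Sum>\<^sub>\<infinity>l\<in>P. - (Im z * (cmod (x l))\<^sup>2)) = - (Im z * nsq P x)"
    unfolding nsq_def infsum_uminus by (subst infsum_cmult_right) (auto intro: l2_summ xl)
  also have "(\<Sum>\<^sub>\<infinity>l\<in>P. Im (a * (cnj (x l) * v l))) = Im (\<Sum>\<^sub>\<infinity>l\<in>P. a * (cnj (x l) * v l))"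
    by (rule infsum_Im[OF sxv])
  also have "(\<Sum>\<^sub>\<infinity>l\<in>P. a * (cnj (x l) * v l)) = a * (\<Sum>\<^sub>\<infinity>l\<in>P. cnj (x l) * v l)"
    by (rule infsum_cmult_right) (rule inner_summ[OF xl v])
  also have "(\<Sum>\<^sub>\<infinity>l\<in>P. cnj (x l) * v l) = cnj p"
  proof -
    have "(\<Sum>\<^sub>\<infinity>l\<in>P. cnj (x l) * v l) = (\<Sum>\<^sub>\<infinity>l\<in>P. cnj (cnj (v l) * x l))" by (simp add: mult.commute)
    also have "\<dots> = cnj p" unfolding p_def l2inner_def by (rule infsum_cnj)
    finally show ?thesis .
  qed
  finally have I1: "Im (l2inner P x y) = Im (a * cnj p) - Im z * nsq P x" by simp
  have I2: "Im (cnj a * \<beta>) = Im (cnj a * p) - Im z * (cmod a)\<^sup>2"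
  proof -
    have "cnj a * \<beta> = cnj a * p + (of_real t - z) * (cnj a * a)" unfolding bdef by (simp add: algebra_simps)
    also have "cnj a * a = of_real ((cmod a)\<^sup>2)" using complex_norm_square[of a] by (simp add: mult.commute)
    finally show ?thesis by simp
  qed
  have I3: "Im (a * cnj p) + Im (cnj a * p) = 0"
  proof -
    show ?thesis by (simp add: algebra_simps)
  qed
  define N where "N = nsq P x + (cmod a)\<^sup>2"
  define s where "s = \<bar>Im z\<bar>"
  have s: "s > 0" using z s_def by simp
  have ImQ: "Im (l2inner P x y + cnj a * \<beta>) = - (Im z * N)"
    using I1 I2 I3 unfolding N_def by (simp add: algebra_simps)
  have "s * N = \<bar>Im (l2inner P x y + cnj a * \<beta>)\<bar>"
    unfolding ImQ s_def N_def using nsq_nonneg[of P x] by (simp add: abs_mult)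
  also have "\<dots> \<le> cmod (l2inner P x y + cnj a * \<beta>)" by (rule abs_Im_le_cmod)
  also have "\<dots> \<le> cmod (l2inner P x y) + cmod a * cmod \<beta>"
    using norm_triangle_ineq[of "l2inner P x y" "cnj a * \<beta>"] by (simp add: norm_mult)
  also have "\<dots> \<le> (s * nsq P x + nsq P y / s) / 2 + (s * (cmod a)\<^sup>2 + (cmod \<beta>)\<^sup>2 / s) / 2"
    using inner_amgm[OF xl yl s] amgm[OF s, of "cmod a" "cmod \<beta>"] by linarith
  also have "\<dots> = (s * N + (nsq P y + (cmod \<beta>)\<^sup>2) / s) / 2"
    unfolding N_def by (simp add: add_divide_distrib distrib_left)
  finally have "s * N \<le> (s * N + (nsq P y + (cmod \<beta>)\<^sup>2) / s) / 2" .
  hence "s * N \<le> (nsq P y + (cmod \<beta>)\<^sup>2) / s" by (rule half_le)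
  hence "s * (s * N) \<le> nsq P y + (cmod \<beta>)\<^sup>2" using s by (simp add: field_simps)
  moreover have "s * (s * N) = (Im z)\<^sup>2 * N" unfolding s_def by (simp add: power2_eq_square)
  ultimately show ?thesis unfolding N_def y_def \<beta>_def by simp
qed

have caseA: "bij_betw (Sop P v t z) (domK P \<times> (UNIV :: complex set)) (Ht P) \<and>
         (\<exists>C. \<forall>u\<in>domK P \<times> (UNIV :: complex set). normT P u \<le> C * normT P (Sop P v t z u))"
    if v: "v \<in> l2 P" and z: "Im z \<noteq> 0"
    for v P z t
proof (rule not_spec[OF v, of "1 / (Im z)\<^sup>2"])
  show "0 \<le> 1 / (Im z)\<^sup>2" by simp
  have bd: "nsq P x + (cmod a)\<^sup>2 \<le> 1 / (Im z)\<^sup>2 * (nsq P (fst (Sop P v t z (x, a))) + (cmod (snd (Sop P v t z (x, a))))\<^sup>2)"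
    if "x \<in> domK P" for x a
    using sym_est[OF v that z, of a t] z by (simp add: field_simps)
  thus "\<And>x a. x \<in> domK P \<Longrightarrow> nsq P x + (cmod a)\<^sup>2 \<le> 1 / (Im z)\<^sup>2 * (nsq P (fst (Sop P v t z (x, a))) + (cmod (snd (Sop P v t z (x, a))))\<^sup>2)"
    by blast
  have d: "0 < \<bar>Im z\<bar>" "\<And>l. l \<in> P \<Longrightarrow> \<bar>Im z\<bar> \<le> cmod (of_real l - z)"
    using z abs_Im_le_cmod[of "of_real _ - z"] by auto
  have c: "of_real t - z - l2inner P v (Rz P z v) \<noteq> 0"
  proof
    assume c0: "of_real t - z - l2inner P v (Rz P z v) = 0"
    from res_kernel[OF d v c0] have k: "(\<lambda>l. - Rz P z v l) \<in> domK P"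
      "Sop P v t z (\<lambda>l. - Rz P z v l, 1) = (\<lambda>_. 0, 0)" by auto
    have "(Im z)\<^sup>2 * (nsq P (\<lambda>l. - Rz P z v l) + (cmod (1::complex))\<^sup>2) \<le> 0"
      using sym_est[OF v k(1) z, of 1 t] k(2) by simp
    moreover have "0 < (Im z)\<^sup>2 * (nsq P (\<lambda>l. - Rz P z v l) + (cmod (1::complex))\<^sup>2)"
      using z nsq_nonneg[of P "\<lambda>l. - Rz P z v l"] by (intro mult_pos_pos) auto
    ultimately show False by linarith
  qed
  show "\<And>y b. y \<in> l2 P \<Longrightarrow> \<exists>x a. x \<in> domK P \<and> Sop P v t z (x, a) = (y, b)"
    by (rule res_surj[OF d v c])
qed

have l2_mono: "x \<in> l2 P"
    if "Q \<subseteq> P" "x \<in> l2 Q"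
    for Q P x
proof -
  have "((\<lambda>l. (cmod (x l))\<^sup>2) summable_on Q) = ((\<lambda>l. (cmod (x l))\<^sup>2) summable_on P)"
    by (rule summable_on_cong_neutral) (use that l2D[OF that(2)] in auto)
  hence "(\<lambda>l. (cmod (x l))\<^sup>2) summable_on P" using l2_summ[OF that(2)] by simp
  moreover have "\<forall>l. l \<notin> P \<longrightarrow> x l = 0" using that(1) l2D[OF that(2)] by blast
  ultimately show ?thesis by (simp add: l2_def)
qed

have domK_mono: "x \<in> domK P"
    if "Q \<subseteq> P" "x \<in> domK Q"
    for Q P x
  using that l2_mono[OF that(1)] by (simp add: domK_def)

have domK_lin: "(\<lambda>l. a * x l + b * y l) \<in> domK P"
    if "x \<in> domK P" "y \<in> domK P"
    for x y P a b
proof -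
  have "(\<lambda>l. a * x l + b * y l) \<in> l2 P" by (rule l2_lin) (use that domK_l2 in auto)
  moreover have "(\<lambda>l. a * multK x l + b * multK y l) \<in> l2 P" by (rule l2_lin) (use that domK_K in auto)
  ultimately show ?thesis by (simp add: domK_def multK_def algebra_simps)
qed

have single_domK: "(\<lambda>l. if l = a then c else 0) \<in> domK P"
    if "a \<in> P"
    for a P c
proof -
  have "multK (\<lambda>l. if l = a then c else 0) = (\<lambda>l. if l = a then of_real a * c else 0)"
    by (auto simp: multK_def fun_eq_iff)
  thus ?thesis using single_l2[OF that] by (simp add: domK_def)
qed

have l2_sum: "(\<lambda>l. \<Sum>n<N. c n * f n l) \<in> l2 P"
    if "\<And>n. n < N \<Longrightarrow> f n \<in> l2 P"
    for N :: nat and f P c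
  using that
proof (induction N)
  case 0 then show ?case by simp
next
  case (Suc N)
  have "(\<lambda>l. 1 * (\<Sum>n<N. c n * f n l) + c N * f N l) \<in> l2 P"
    by (rule l2_lin) (use Suc in auto)
  thus ?case by simp
qed

have funpow_multK: "(multK ^^ n) v l = (of_real l) ^ n * v l"
    for n v l
  by (induction n) (auto simp: multK_def)

have cyclic_nz: "v l0 \<noteq> 0"
    if cyc: "cyclic_vec P v" and l0: "l0 \<in> P"
    for P v l0
proof
  assume v0: "v l0 = 0"
  define e where "e = (\<lambda>l. if l = l0 then (1::complex) else 0)"
  have e: "e \<in> l2 P" using single_l2[OF l0] e_def by simp
  have cy: "\<forall>x \<in> l2 P. \<forall>e>0. \<exists>N (c :: nat \<Rightarrow> complex).
        l2norm P (\<lambda>l. x l - (\<Sum>n<N. c n * (multK ^^ n) v l)) < e"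
    by (rule cyc[unfolded cyclic_vec_def, THEN conjunct2, THEN conjunct2])
  obtain N c where Nc: "l2norm P (\<lambda>l. e l - (\<Sum>n<N. c n * (multK ^^ n) v l)) < 1"
    using cy[rule_format, OF e zero_less_one] by (elim exE) (rule that)
  define S where "S = (\<lambda>l. \<Sum>n<N. c n * (multK ^^ n) v l)"
  have S: "S \<in> l2 P" unfolding S_def by (rule l2_sum) (use cyc in \<open>auto simp: cyclic_vec_def\<close>)
  define g where "g = (\<lambda>l. 1 * e l + (-1) * S l)"
  have g: "g \<in> l2 P" unfolding g_def by (rule l2_lin[OF e S])
  have "g l0 = 1" unfolding g_def S_def e_def by (simp add: funpow_multK v0)
  hence "1 \<le> nsq P g" using nsq_ge_pt[OF g l0] by simp
  hence "1 \<le> l2norm P g" unfolding l2norm_def nsq_def[symmetric] by simp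
  moreover have "l2norm P g < 1" using Nc unfolding g_def S_def by simp
  ultimately show False by simp
qed

have finite_big: "finite {l \<in> P. \<epsilon> \<le> f l}"
    if s: "f summable_on P" and nn: "\<And>l. l \<in> P \<Longrightarrow> 0 \<le> f l" and e: "0 < \<epsilon>"
    for f :: "real \<Rightarrow> real" and P \<epsilon>
proof (rule ccontr)
  assume inf: "infinite {l \<in> P. \<epsilon> \<le> f l}"
  obtain n :: nat where n: "infsum f P / \<epsilon> < n" using reals_Archimedean2[of "infsum f P / \<epsilon>"] by (elim exE) (rule that)
  obtain B where B: "finite B" "card B = n" "B \<subseteq> {l \<in> P. \<epsilon> \<le> f l}"
    using infinite_arbitrarily_large[OF inf, of n] by (elim exE conjE) (rule that)
  have "of_nat n * \<epsilon> = (\<Sum>l\<in>B. \<epsilon>)" using B by simp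
  also have "\<dots> \<le> sum f B" using B by (intro sum_mono) auto
  also have "\<dots> \<le> infsum f P" by (rule finite_sum_le_infsum[OF s B(1)]) (use B nn in auto)
  finally have "of_nat n * \<epsilon> \<le> infsum f P" .
  moreover have "infsum f P < of_nat n * \<epsilon>" using n e by (simp add: field_simps)
  ultimately show False by simp
qed

have arith_B: "NX + A \<le> (3 * (3 / d\<^sup>2 + 3 * V / (W * d\<^sup>2)) + 3 * (3 * (1 + V * (3 / d\<^sup>2 + 3 * V / (W * d\<^sup>2)) + T2 / W) / W) + 1 / W) * Y"
    if W: "W > 0" and d: "d > 0" and Y: "Y \<ge> 0" and V: "V \<ge> 0" and A: "A \<ge> 0" and T2: "T2 \<ge> 0"
    and X': "X' \<ge> 0"
    and h1: "A * W \<le> Y"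
    and h2: "X' \<le> 3 / d\<^sup>2 * Y + 3 * (A / d\<^sup>2) * V"
    and h3: "X0 * W \<le> 3 * (Y + V * X' + T2 * A)"
    and h4: "NX \<le> 3 * X' + 3 * X0"
    for Y W d V A X' X0 NX T2 :: real
proof -
  define c2 where "c2 = 3 / d\<^sup>2 + 3 * V / (W * d\<^sup>2)"
  define c3 where "c3 = 3 * (1 + V * c2 + T2 / W) / W"
  have a: "A \<le> Y / W" using h1 W by (simp add: le_divide_eq)
  have "3 * (A / d\<^sup>2) * V \<le> 3 * ((Y / W) / d\<^sup>2) * V"
    using a d V by (intro mult_right_mono mult_left_mono divide_right_mono) auto
  moreover have "3 / d\<^sup>2 * Y + 3 * ((Y / W) / d\<^sup>2) * V = c2 * Y"
    unfolding c2_def using W d by (simp add: field_simps)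
  ultimately have x': "X' \<le> c2 * Y" using h2 by linarith
  have "Y + V * X' + T2 * A \<le> Y + V * (c2 * Y) + T2 * (Y / W)"
    using x' V a T2 by (intro add_mono mult_left_mono) auto
  hence "3 * (Y + V * X' + T2 * A) \<le> 3 * (Y + V * (c2 * Y) + T2 * (Y / W))" by simp
  hence "X0 * W \<le> 3 * (Y + V * (c2 * Y) + T2 * (Y / W))" using h3 by (rule order.trans[rotated])
  hence "X0 \<le> 3 * (Y + V * (c2 * Y) + T2 * (Y / W)) / W" using W by (simp add: le_divide_eq)
  also have "\<dots> = c3 * Y" unfolding c3_def using W by (simp add: field_simps)
  finally have x0: "X0 \<le> c3 * Y" .
  have "NX + A \<le> 3 * (c2 * Y) + 3 * (c3 * Y) + Y / W" using h4 x' x0 a by linarith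
  also have "\<dots> = (3 * c2 + 3 * c3 + 1 / W) * Y" by (simp add: field_simps)
  finally show ?thesis unfolding c3_def c2_def .
qed

have sq3: "(p + q + r)\<^sup>2 \<le> 3 * (p\<^sup>2 + q\<^sup>2 + r\<^sup>2)"
    if "0 \<le> p" "0 \<le> q" "0 \<le> r"
    for p q r :: real
proof -
  have "3 * (p\<^sup>2 + q\<^sup>2 + r\<^sup>2) - (p + q + r)\<^sup>2 = (p - q)\<^sup>2 + (q - r)\<^sup>2 + (p - r)\<^sup>2"
    by (simp add: power2_eq_square algebra_simps)
  moreover have "0 \<le> (p - q)\<^sup>2 + (q - r)\<^sup>2 + (p - r)\<^sup>2" by simp
  ultimately show ?thesis by linarith
qed

have cmod_diff_real: "cmod (of_real l - of_real r) = \<bar>l - r\<bar>"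
    for l r :: real
  by (metis norm_of_real of_real_diff)

have caseB_bound: "nsq P x + (cmod a)\<^sup>2 \<le>
     (3 * (3 / d\<^sup>2 + 3 * nsq P v / ((cmod (v l0))\<^sup>2 * d\<^sup>2)) + 3 * (3 * (1 + nsq P v * (3 / d\<^sup>2 + 3 * nsq P v / ((cmod (v l0))\<^sup>2 * d\<^sup>2)) + (cmod (of_real t - of_real l0))\<^sup>2 / (cmod (v l0))\<^sup>2) / (cmod (v l0))\<^sup>2) + 1 / (cmod (v l0))\<^sup>2)
     * (nsq P (fst (Sop P v t (of_real l0) (x, a))) + (cmod (snd (Sop P v t (of_real l0) (x, a))))\<^sup>2)"
    if v: "v \<in> l2 P" and l0: "l0 \<in> P" and w0: "v l0 \<noteq> 0" and d: "0 < d"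
    and dd: "\<And>l. l \<in> P \<Longrightarrow> l \<noteq> l0 \<Longrightarrow> d \<le> \<bar>l - l0\<bar>"
    and x: "x \<in> domK P"
    for v P l0 d x a t
proof -
  define z0 :: complex where "z0 = of_real l0"
  define y where "y = fst (Sop P v t z0 (x, a))"
  define \<beta> where "\<beta> = snd (Sop P v t z0 (x, a))"
  define Y where "Y = nsq P y + (cmod \<beta>)\<^sup>2"
  define W where "W = (cmod (v l0))\<^sup>2"
  define V where "V = nsq P v"
  define T2 where "T2 = (cmod (of_real t - z0))\<^sup>2"
  have xl: "x \<in> l2 P" using x domK_l2 by blast
  have yl: "y \<in> l2 P" using Sop_maps[OF v x, of t z0 a] unfolding y_def by (simp add: Ht_def mem_Times_iff)
  have ydef: "y l = of_real l * x l + a * v l - z0 * x l" for l by (simp add: y_def Sop_def)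
  have bdef: "\<beta> = l2inner P v x + (of_real t - z0) * a" by (simp add: \<beta>_def Sop_def)
  have W: "W > 0" using w0 W_def by simp
  have Y0: "nsq P y \<le> Y" "(cmod \<beta>)\<^sup>2 \<le> Y" unfolding Y_def using nsq_nonneg[of P y] by auto
  have yl0: "y l0 = a * v l0" using ydef[of l0] z0_def by simp
  have h1: "(cmod a)\<^sup>2 * W \<le> Y"
  proof -
    have "(cmod a)\<^sup>2 * W = (cmod (y l0))\<^sup>2" unfolding yl0 W_def by (simp add: norm_mult power_mult_distrib)
    also have "\<dots> \<le> nsq P y" by (rule nsq_ge_pt[OF yl l0])
    finally show ?thesis using Y0 by linarith
  qed
  define x' where "x' = (\<lambda>l. if l = l0 then 0 else x l)"
  have b2: "x' \<in> l2 P \<and> nsq P x' \<le> 3*(1/d)\<^sup>2*nsq P y + 3*(cmod a / d)\<^sup>2*nsq P v + 3*0\<^sup>2*nsq P v"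
  proof (rule l2_bound3)
    fix l assume l: "l \<in> P"
    show "cmod (x' l) \<le> 1/d * cmod (y l) + cmod a / d * cmod (v l) + 0 * cmod (v l)"
    proof (cases "l = l0")
      case True then show ?thesis using d by (auto simp: x'_def intro!: add_nonneg_nonneg divide_nonneg_pos)
    next
      case False
      have dl: "d \<le> \<bar>l - l0\<bar>" using dd[OF l False] .
      have e: "(of_real l - z0) * x l = y l - a * v l" unfolding ydef by (simp add: algebra_simps)
      have "cmod (of_real l - z0) * cmod (x l) = cmod (y l - a * v l)"
        using arg_cong[OF e, of cmod] by (simp add: norm_mult)
      also have "\<dots> \<le> cmod (y l) + cmod a * cmod (v l)"
        using norm_triangle_ineq4[of "y l" "a * v l"] by (simp add: norm_mult)
      finally have "\<bar>l - l0\<bar> * cmod (x l) \<le> cmod (y l) + cmod a * cmod (v l)"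
        unfolding z0_def cmod_diff_real .
      moreover have "d * cmod (x l) \<le> \<bar>l - l0\<bar> * cmod (x l)" using dl by (intro mult_right_mono) auto
      ultimately have "d * cmod (x l) \<le> cmod (y l) + cmod a * cmod (v l)" by linarith
      hence "cmod (x l) \<le> (cmod (y l) + cmod a * cmod (v l)) / d" using d by (simp add: field_simps)
      thus ?thesis using False by (simp add: x'_def add_divide_distrib)
    qed
  qed (use xl v yl l2D[OF xl] d in \<open>auto simp: x'_def\<close>)
  have x'l: "x' \<in> l2 P" using b2 by blast
  have h2: "nsq P x' \<le> 3 / d\<^sup>2 * Y + 3 * ((cmod a)\<^sup>2 / d\<^sup>2) * V"
  proof -
    have "3*(1/d)\<^sup>2*nsq P y \<le> 3 / d\<^sup>2 * Y" using Y0 d by (simp add: power_divide divide_right_mono)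
    moreover have "3*(cmod a / d)\<^sup>2*nsq P v = 3 * ((cmod a)\<^sup>2 / d\<^sup>2) * V" by (simp add: V_def power_divide)
    ultimately show ?thesis using b2 by simp
  qed
  define e where "e = (\<lambda>l. if l = l0 then (1::complex) else 0)"
  have el: "e \<in> l2 P" "nsq P e = 1" using single_l2[OF l0, of 1] unfolding e_def by auto
  have xdec: "x = (\<lambda>l. 1 * x' l + x l0 * e l)" by (auto simp: fun_eq_iff x'_def e_def)
  have inn: "l2inner P v x = l2inner P v x' + x l0 * cnj (v l0)"
  proof -
    have "l2inner P v x = 1 * l2inner P v x' + x l0 * l2inner P v e"
      by (subst xdec) (rule inner_lin[OF v x'l el(1)])
    also have "l2inner P v e = cnj (v l0)" unfolding e_def using inner_single[OF l0, of v 1] by simp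
    finally show ?thesis by simp
  qed
  have h3: "(cmod (x l0))\<^sup>2 * W \<le> 3 * (Y + V * nsq P x' + T2 * (cmod a)\<^sup>2)"
  proof -
    have eq: "x l0 * cnj (v l0) = \<beta> - l2inner P v x' - (of_real t - z0) * a" using bdef inn by simp
    have "(cmod (x l0))\<^sup>2 * W = (cmod (x l0 * cnj (v l0)))\<^sup>2" unfolding W_def by (simp add: norm_mult power_mult_distrib)
    also have "\<dots> = (cmod (\<beta> - l2inner P v x' - (of_real t - z0) * a))\<^sup>2" unfolding eq ..
    also have "\<dots> \<le> (cmod \<beta> + cmod (l2inner P v x') + cmod (of_real t - z0) * cmod a)\<^sup>2"
    proof (rule power_mono)
      have "cmod (\<beta> - l2inner P v x' - (of_real t - z0) * a) \<le> cmod (\<beta> - l2inner P v x') + cmod ((of_real t - z0) * a)"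
        by (rule norm_triangle_ineq4)
      also have "\<dots> \<le> cmod \<beta> + cmod (l2inner P v x') + cmod ((of_real t - z0) * a)"
        using norm_triangle_ineq4[of \<beta> "l2inner P v x'"] by simp
      finally show "cmod (\<beta> - l2inner P v x' - (of_real t - z0) * a) \<le> cmod \<beta> + cmod (l2inner P v x') + cmod (of_real t - z0) * cmod a"
        by (simp add: norm_mult)
    qed simp
    also have "\<dots> \<le> 3 * ((cmod \<beta>)\<^sup>2 + (cmod (l2inner P v x'))\<^sup>2 + (cmod (of_real t - z0) * cmod a)\<^sup>2)"
      by (rule sq3) auto
    also have "\<dots> \<le> 3 * (Y + V * nsq P x' + T2 * (cmod a)\<^sup>2)"
    proof -
      have "(cmod (l2inner P v x'))\<^sup>2 \<le> V * nsq P x'" unfolding V_def by (rule inner_CS2[OF v x'l])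
      moreover have "(cmod (of_real t - z0) * cmod a)\<^sup>2 = T2 * (cmod a)\<^sup>2" unfolding T2_def by (simp add: power_mult_distrib)
      ultimately show ?thesis using Y0 by (intro mult_left_mono add_mono) auto
    qed
    finally show ?thesis .
  qed
  have h4: "nsq P x \<le> 3 * nsq P x' + 3 * (cmod (x l0))\<^sup>2"
  proof -
    have "x \<in> l2 P \<and> nsq P x \<le> 3*1\<^sup>2*nsq P x' + 3*(cmod (x l0))\<^sup>2*nsq P e + 3*0\<^sup>2*nsq P e"
    proof (rule l2_bound3)
      fix l assume "l \<in> P"
      show "cmod (x l) \<le> 1 * cmod (x' l) + cmod (x l0) * cmod (e l) + 0 * cmod (e l)"
        by (cases "l = l0") (auto simp: x'_def e_def)
    qed (use l2D[OF xl] x'l el in auto)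
    thus ?thesis using el by simp
  qed
  have "nsq P x + (cmod a)\<^sup>2 \<le> (3 * (3 / d\<^sup>2 + 3 * V / (W * d\<^sup>2)) + 3 * (3 * (1 + V * (3 / d\<^sup>2 + 3 * V / (W * d\<^sup>2)) + T2 / W) / W) + 1 / W) * Y"
    by (rule arith_B[OF W d _ _ _ _ _ h1 h2 h3 h4])
       (auto simp: Y_def V_def T2_def intro: add_nonneg_nonneg nsq_nonneg)
  thus ?thesis unfolding Y_def V_def T2_def W_def y_def \<beta>_def z0_def .
qed

have caseB_surj: "\<exists>x a. x \<in> domK P \<and> Sop P v t (of_real l0) (x, a) = (y, b)"
    if v: "v \<in> l2 P" and l0: "l0 \<in> P" and w0: "v l0 \<noteq> 0" and d: "0 < d"
    and dd: "\<And>l. l \<in> P \<Longrightarrow> l \<noteq> l0 \<Longrightarrow> d \<le> \<bar>l - l0\<bar>"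
    and y: "y \<in> l2 P"
    for v P l0 d y t b
proof -
  define z0 :: complex where "z0 = of_real l0"
  define Q where "Q = P - {l0}"
  define a where "a = y l0 / v l0"
  define g where "g = (\<lambda>l. y l - a * v l)"
  have g0: "g l0 = 0" using w0 by (simp add: g_def a_def)
  have gP: "g \<in> l2 P" unfolding g_def using l2_lin[OF y v, of 1 "-a"] by simp
  have gQ: "g \<in> l2 Q"
  proof -
    have "(\<lambda>l. (cmod (g l))\<^sup>2) summable_on Q"
      by (rule summable_on_subset[OF l2_summ[OF gP]]) (auto simp: Q_def)
    moreover have "\<forall>l. l \<notin> Q \<longrightarrow> g l = 0" using g0 l2D[OF gP] by (auto simp: Q_def)
    ultimately show ?thesis by (simp add: l2_def)
  qed
  have dQ: "d \<le> cmod (of_real l - z0)" if "l \<in> Q" for l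
    using dd[of l] that unfolding Q_def z0_def cmod_diff_real by auto
  define x' where "x' = Rz Q z0 g"
  have x'Q: "x' \<in> domK Q" unfolding x'_def by (rule Rz_dom[OF d dQ gQ])
  have x'P: "x' \<in> domK P" by (rule domK_mono[OF _ x'Q]) (auto simp: Q_def)
  have x'l: "x' \<in> l2 P" using x'P domK_l2 by blast
  define x0 where "x0 = (b - (of_real t - z0) * a - l2inner P v x') / cnj (v l0)"
  define e where "e = (\<lambda>l. if l = l0 then (1::complex) else 0)"
  have eD: "e \<in> domK P" unfolding e_def by (rule single_domK[OF l0])
  have el: "e \<in> l2 P" using eD domK_l2 by blast
  define x where "x = (\<lambda>l. 1 * x' l + x0 * e l)"
  have xD: "x \<in> domK P" unfolding x_def by (rule domK_lin[OF x'P eD])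
  have inn: "l2inner P v x = l2inner P v x' + x0 * cnj (v l0)"
  proof -
    have "l2inner P v x = 1 * l2inner P v x' + x0 * l2inner P v e"
      unfolding x_def by (rule inner_lin[OF v x'l el])
    also have "l2inner P v e = cnj (v l0)" unfolding e_def using inner_single[OF l0, of v 1] by simp
    finally show ?thesis by simp
  qed
  have x0e: "x0 * cnj (v l0) = b - (of_real t - z0) * a - l2inner P v x'"
    using w0 unfolding x0_def by simp
  have s2: "l2inner P v x + (of_real t - z0) * a = b"
    unfolding inn x0e by simp
  have f: "of_real l * x l + a * v l - z0 * x l = y l" for l
  proof (cases "l = l0")
    case True
    have "x l = x0" using True by (simp add: x_def x'_def Rz_def Q_def e_def)
    then show ?thesis using True w0 by (simp add: z0_def a_def)
  next
    case False
    show ?thesis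
    proof (cases "l \<in> P")
      case True
      have lQ: "l \<in> Q" using True False by (simp add: Q_def)
      have nz: "of_real l - z0 \<noteq> 0" using dQ[OF lQ] d by (metis norm_zero not_le)
      have xl: "x l = g l / (of_real l - z0)" using lQ False by (simp add: x_def x'_def Rz_def e_def)
      have h: "(of_real l - z0) * x l = y l - a * v l" using nz xl by (simp add: g_def)
      have "of_real l * x l + a * v l - z0 * x l = (of_real l - z0) * x l + a * v l" by (simp add: algebra_simps)
      then show ?thesis using h by simp
    next
      case nP: False
      have "x l = 0" using nP False by (simp add: x_def x'_def Rz_def Q_def e_def)
      then show ?thesis using l2D[OF v nP] l2D[OF y nP] by simp
    qed
  qed
  have "Sop P v t z0 (x, a) = (y, b)" using s2 f by (simp add: Sop_def fun_eq_iff)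
  thus ?thesis using xD z0_def by blast
qed

have caseB: "bij_betw (Sop P v t (of_real l0)) (domK P \<times> (UNIV :: complex set)) (Ht P) \<and>
         (\<exists>C. \<forall>u\<in>domK P \<times> (UNIV :: complex set). normT P u \<le> C * normT P (Sop P v t (of_real l0) u))"
    if v: "v \<in> l2 P" and l0: "l0 \<in> P" and w0: "v l0 \<noteq> 0" and d: "0 < d"
    and dd: "\<And>l. l \<in> P \<Longrightarrow> l \<noteq> l0 \<Longrightarrow> d \<le> \<bar>l - l0\<bar>"
    for v P l0 d t
proof (rule not_spec[OF v _ caseB_bound[OF v l0 w0 d dd] caseB_surj[OF v l0 w0 d dd]])
  show "0 \<le> (3 * (3 / d\<^sup>2 + 3 * nsq P v / ((cmod (v l0))\<^sup>2 * d\<^sup>2)) + 3 * (3 * (1 + nsq P v * (3 / d\<^sup>2 + 3 * nsq P v / ((cmod (v l0))\<^sup>2 * d\<^sup>2)) + (cmod (of_real t - of_real l0))\<^sup>2 / (cmod (v l0))\<^sup>2) / (cmod (v l0))\<^sup>2) + 1 / (cmod (v l0))\<^sup>2)"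
    using nsq_nonneg[of P v] by (intro add_nonneg_nonneg mult_nonneg_nonneg divide_nonneg_nonneg) auto
qed

have zero_domK: "(\<lambda>_. 0) \<in> domK P"
    for P
  by (simp add: domK_def multK_def)

have caseC: "\<exists>t. \<not> bij_betw (Sop P v t (of_real r)) (domK P \<times> (UNIV :: complex set)) (Ht P)"
    if v: "v \<in> l2 P" and d: "0 < d" and dd: "\<And>l. l \<in> P \<Longrightarrow> d \<le> \<bar>l - r\<bar>"
    for v P d r
proof -
  define z :: complex where "z = of_real r"
  have d': "d \<le> cmod (of_real l - z)" if "l \<in> P" for l
    using dd[OF that] unfolding z_def cmod_diff_real .
  define F where "F = l2inner P v (Rz P z v)"
  have Rl: "Rz P z v \<in> l2 P" using Rz_dom[OF d d' v] domK_l2 by blast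
  have sm: "(\<lambda>l. cnj (v l) * Rz P z v l) summable_on P" by (rule inner_summ[OF v Rl])
  have ImF: "Im F = 0"
  proof -
    have "Im F = (\<Sum>\<^sub>\<infinity>l\<in>P. Im (cnj (v l) * Rz P z v l))"
      unfolding F_def l2inner_def by (rule infsum_Im[OF sm, symmetric])
    also have "\<dots> = 0"
    proof (rule infsum_0)
      fix l assume l: "l \<in> P"
      have "cnj (v l) * Rz P z v l = (cnj (v l) * v l) / of_real (l - r)"
        using l by (simp add: Rz_def z_def)
      also have "cnj (v l) * v l = of_real ((cmod (v l))\<^sup>2)"
        using complex_norm_square[of "v l"] by (simp add: mult.commute)
      finally have "cnj (v l) * Rz P z v l = of_real ((cmod (v l))\<^sup>2 / (l - r))" by simp
      thus "Im (cnj (v l) * Rz P z v l) = 0" by simp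
    qed
    finally show ?thesis .
  qed
  define t where "t = Re (z + F)"
  have c0: "of_real t - z - l2inner P v (Rz P z v) = 0"
    unfolding F_def[symmetric] t_def using ImF by (simp add: complex_eq_iff z_def)
  from res_kernel[OF d d' v c0] have k: "(\<lambda>l. - Rz P z v l) \<in> domK P"
    "Sop P v t z (\<lambda>l. - Rz P z v l, 1) = (\<lambda>_. 0, 0)" by auto
  have k0: "Sop P v t z (\<lambda>_. 0, 0) = (\<lambda>_. 0, 0)"
    using inner_zero_right[of P "\<lambda>_. 0" v] by (simp add: Sop_def)
  have "\<not> inj_on (Sop P v t z) (domK P \<times> (UNIV :: complex set))"
  proof
    assume inj: "inj_on (Sop P v t z) (domK P \<times> (UNIV :: complex set))"
    have "(\<lambda>l. - Rz P z v l, 1::complex) = (\<lambda>_. 0, 0)"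
      by (rule inj_onD[OF inj]) (use k k0 zero_domK in auto)
    thus False by simp
  qed
  thus ?thesis unfolding bij_betw_def z_def by blast
qed

have caseD: "\<not> (\<exists>C. \<forall>u\<in>domK P \<times> (UNIV :: complex set). normT P u \<le> C * normT P (Sop P v t (of_real r) u))"
    if v: "v \<in> l2 P" and r: "r \<notin> P" and nd: "\<And>d. 0 < d \<Longrightarrow> \<exists>l\<in>P. \<bar>l - r\<bar> < d"
    for v P r t
proof
  assume "\<exists>C. \<forall>u\<in>domK P \<times> (UNIV :: complex set). normT P u \<le> C * normT P (Sop P v t (of_real r) u)"
  then obtain C where C: "\<And>u. u \<in> domK P \<times> (UNIV :: complex set) \<Longrightarrow> normT P u \<le> C * normT P (Sop P v t (of_real r) u)"
    by blast
  define \<epsilon> where "\<epsilon> = 1 / (2 * (\<bar>C\<bar> + 1))"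
  have \<epsilon>: "0 < \<epsilon>" unfolding \<epsilon>_def by (simp add: add_pos_nonneg)
  define S where "S = {l \<in> P. \<epsilon>\<^sup>2 \<le> (cmod (v l))\<^sup>2}"
  have fS: "finite S" unfolding S_def by (rule finite_big[OF l2_summ[OF v]]) (use \<epsilon> in auto)
  obtain \<delta> where \<delta>: "0 < \<delta>" "\<And>x. x \<in> S \<Longrightarrow> x \<noteq> r \<Longrightarrow> \<delta> \<le> dist r x"
    using finite_set_avoid[OF fS, of r] by blast
  obtain l where l: "l \<in> P" "\<bar>l - r\<bar> < min \<epsilon> \<delta>" using nd[of "min \<epsilon> \<delta>"] \<epsilon> \<delta>(1) by auto
  have lr: "l \<noteq> r" using l r by auto
  have "l \<notin> S"
  proof
    assume "l \<in> S"
    hence "\<delta> \<le> dist r l" using \<delta>(2) lr by blast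
    moreover have "dist r l = \<bar>l - r\<bar>" by (simp add: dist_real_def)
    ultimately show False using l(2) by simp
  qed
  hence vl: "(cmod (v l))\<^sup>2 < \<epsilon>\<^sup>2" using l(1) unfolding S_def by auto
  have lr2: "(l - r)\<^sup>2 < \<epsilon>\<^sup>2"
  proof -
    have "\<bar>l - r\<bar> < \<epsilon>" using l(2) by simp
    hence "\<bar>l - r\<bar>\<^sup>2 < \<epsilon>\<^sup>2" by (intro power_strict_mono) auto
    thus ?thesis by simp
  qed
  define e where "e = (\<lambda>k. if k = l then (1::complex) else 0)"
  have eD: "e \<in> domK P" unfolding e_def by (rule single_domK[OF l(1)])
  have ne: "nsq P e = 1" using single_l2[OF l(1), of 1] unfolding e_def by simp
  have u1: "normT P (e, 0) = 1" using ne by (simp add: normT_eq)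
  have Su: "Sop P v t (of_real r) (e, 0) = (\<lambda>k. if k = l then of_real l - of_real r else 0, cnj (v l))"
    using inner_single[OF l(1), of v 1] by (auto simp: Sop_def e_def fun_eq_iff)
  have nS: "nsq P (\<lambda>k. if k = l then of_real l - of_real r else 0) = (l - r)\<^sup>2"
    using single_l2[OF l(1), of "of_real l - of_real r"] by (simp add: cmod_diff_real)
  have "normT P (Sop P v t (of_real r) (e, 0)) = sqrt ((l - r)\<^sup>2 + (cmod (v l))\<^sup>2)"
    unfolding Su normT_eq using nS by simp
  also have "\<dots> \<le> sqrt ((2 * \<epsilon>)\<^sup>2)"
  proof (rule real_sqrt_le_mono)
    have "(2 * \<epsilon>)\<^sup>2 = 4 * \<epsilon>\<^sup>2" by (simp add: power_mult_distrib)
    moreover have "0 \<le> \<epsilon>\<^sup>2" by simp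
    ultimately show "(l - r)\<^sup>2 + (cmod (v l))\<^sup>2 \<le> (2 * \<epsilon>)\<^sup>2" using vl lr2 by linarith
  qed
  also have "\<dots> = 2 * \<epsilon>" using \<epsilon> by (simp only: real_sqrt_abs)
  finally have nSu: "normT P (Sop P v t (of_real r) (e, 0)) \<le> 2 * \<epsilon>" .
  have "1 \<le> C * normT P (Sop P v t (of_real r) (e, 0))" using C[of "(e, 0)"] eD u1 by simp
  also have "\<dots> \<le> \<bar>C\<bar> * normT P (Sop P v t (of_real r) (e, 0))"
    by (intro mult_right_mono) (auto simp: normT_def)
  also have "\<dots> \<le> \<bar>C\<bar> * (2 * \<epsilon>)" by (intro mult_left_mono nSu) simp
  also have "\<dots> < 1" unfolding \<epsilon>_def by (simp add: field_simps)
  finally show False by simp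
qed

  have v: "v \<in> l2 P" using assms(3) by (simp add: cyclic_vec_def)
  show ?thesis unfolding spec_eq
  proof (intro equalityI subsetI)
    fix z assume "z \<in> (\<Union>t::real. {z. \<not> (bij_betw (Sop P v t z) (domK P \<times> UNIV) (Ht P) \<and>
        (\<exists>C. \<forall>u\<in>domK P \<times> UNIV. normT P u \<le> C * normT P (Sop P v t z u)))})"
    then obtain t where zt: "\<not> (bij_betw (Sop P v t z) (domK P \<times> (UNIV :: complex set)) (Ht P) \<and>
        (\<exists>C. \<forall>u\<in>domK P \<times> (UNIV :: complex set). normT P u \<le> C * normT P (Sop P v t z u)))" by blast
    have Im0: "Im z = 0" using caseA[OF v, of z t] zt by blast
    define r where "r = Re z"
    have zr: "z = of_real r" using Im0 unfolding r_def by (simp add: complex_eq_iff)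
    have "r \<notin> P"
    proof
      assume rP: "r \<in> P"
      have "r isolated_in P" using assms(2) rP by (rule discreteD)
      then obtain d where d: "d > 0" "\<And>y. y \<in> P \<Longrightarrow> dist r y < d \<Longrightarrow> y = r"
        by (rule isolated_inE_dist) blast
      have dd: "d \<le> \<bar>l - r\<bar>" if "l \<in> P" "l \<noteq> r" for l
      proof (rule ccontr)
        assume "\<not> d \<le> \<bar>l - r\<bar>"
        hence "dist r l < d" by (simp add: dist_real_def abs_minus_commute)
        thus False using d(2)[OF that(1)] that(2) by blast
      qed
      have w0: "v r \<noteq> 0" by (rule cyclic_nz[OF assms(3) rP])
      show False using caseB[OF v rP w0 d(1) dd, of t] zt zr by blast
    qed
    thus "z \<in> complex_of_real ` (UNIV - P)" using zr by blast
  next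
    fix z assume "z \<in> complex_of_real ` (UNIV - P)"
    then obtain r where r: "r \<notin> P" "z = of_real r" by blast
    show "z \<in> (\<Union>t::real. {z. \<not> (bij_betw (Sop P v t z) (domK P \<times> UNIV) (Ht P) \<and>
        (\<exists>C. \<forall>u\<in>domK P \<times> UNIV. normT P u \<le> C * normT P (Sop P v t z u)))})"
    proof (cases "\<exists>d>0. \<forall>l\<in>P. d \<le> \<bar>l - r\<bar>")
      case True
      then obtain d where d: "d > 0" "\<And>l. l \<in> P \<Longrightarrow> d \<le> \<bar>l - r\<bar>" by blast
      obtain t where "\<not> bij_betw (Sop P v t (of_real r)) (domK P \<times> (UNIV :: complex set)) (Ht P)"
        using caseC[OF v d] by blast
      thus ?thesis using r by blast
    next
      case False
      have nd: "\<exists>l\<in>P. \<bar>l - r\<bar> < d" if "0 < d" for d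
        using False that by (meson not_le)
      have "\<not> (\<exists>C. \<forall>u\<in>domK P \<times> (UNIV :: complex set). normT P u \<le> C * normT P (Sop P v 0 (of_real r) u))"
        by (rule caseD[OF v r(1) nd])
      thus ?thesis using r by blast
    qed
  qed
qed

end
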